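(* Let $R$ be a tree and let $X\subseteq V(R)$ with $|X|=n$ even. Call a partition $\{X_1,\dots,X_{n/2}\}$ of $X$ into sets of size two feasible if there are $n/2$ pairwise vertex-disjoint paths $P_1,\dots,P_{n/2}$ of $R$ such that for each $i$ the ends of $P_i$ are the two members of $X_i$. Then there is at most one feasible partition of $X$. *)

theory Defs
  imports Main "HOL-Library.Disjoint_Sets"
begin

definition simple_graph :: "'a set \<Rightarrow> ('a \<Rightarrow> 'a \<Rightarrow> bool) \<Rightarrow> bool" where
  "simple_graph V E \<longleftrightarrow> finite V \<and> (\<forall>x y. E x y \<longrightarrow> x \<in> V \<and> y \<in> V)
     \<and> (\<forall>x y. E x y \<longrightarrow> E y x) \<and> (\<forall>x. \<not> E x x)"

definition is_path :: "'a set \<Rightarrow> ('a \<Rightarrow> 'a \<Rightarrow> bool) \<Rightarrow> 'a list \<Rightarrow> bool" where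
  "is_path V E p \<longleftrightarrow> p \<noteq> [] \<and> distinct p \<and> set p \<subseteq> V
     \<and> (\<forall>i. Suc i < length p \<longrightarrow> E (p ! i) (p ! Suc i))"

definition graph_connected :: "'a set \<Rightarrow> ('a \<Rightarrow> 'a \<Rightarrow> bool) \<Rightarrow> bool" where
  "graph_connected V E \<longleftrightarrow> (\<forall>x\<in>V. \<forall>y\<in>V. \<exists>p. is_path V E p \<and> hd p = x \<and> last p = y)"

definition has_cycle :: "'a set \<Rightarrow> ('a \<Rightarrow> 'a \<Rightarrow> bool) \<Rightarrow> bool" where
  "has_cycle V E \<longleftrightarrow> (\<exists>c. is_path V E c \<and> length c \<ge> 3 \<and> E (last c) (hd c))"

definition is_tree :: "'a set \<Rightarrow> ('a \<Rightarrow> 'a \<Rightarrow> bool) \<Rightarrow> bool" where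
  "is_tree V E \<longleftrightarrow> simple_graph V E \<and> V \<noteq> {} \<and> graph_connected V E \<and> \<not> has_cycle V E"

definition pair_partition :: "'a set \<Rightarrow> 'a set set \<Rightarrow> bool" where
  "pair_partition X P \<longleftrightarrow> partition_on X P \<and> (\<forall>B\<in>P. card B = 2)"

definition feasible :: "'a set \<Rightarrow> ('a \<Rightarrow> 'a \<Rightarrow> bool) \<Rightarrow> 'a set \<Rightarrow> 'a set set \<Rightarrow> bool" where
  "feasible V E X P \<longleftrightarrow> pair_partition X P \<and>
     (\<exists>path. (\<forall>B\<in>P. is_path V E (path B) \<and> {hd (path B), last (path B)} = B)
       \<and> (\<forall>B\<in>P. \<forall>C\<in>P. B \<noteq> C \<longrightarrow> set (path B) \<inter> set (path C) = {}))"

end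

theory Submission
  imports Defs
begin

definition linked :: "'a set \<Rightarrow> ('a \<Rightarrow> 'a \<Rightarrow> bool) \<Rightarrow> 'a set set \<Rightarrow> ('a set \<Rightarrow> 'a list) \<Rightarrow> bool" where
  "linked V E P f \<longleftrightarrow> (\<forall>B\<in>P. is_path V E (f B) \<and> {hd (f B), last (f B)} = B)
       \<and> (\<forall>B\<in>P. \<forall>C\<in>P. B \<noteq> C \<longrightarrow> set (f B) \<inter> set (f C) = {})"

lemma pp_iff: "pair_partition X P \<longleftrightarrow> (\<forall>B\<in>P. B \<subseteq> X \<and> card B = 2) \<and> (\<forall>x\<in>X. \<exists>B\<in>P. x \<in> B)
   \<and> (\<forall>B\<in>P. \<forall>C\<in>P. \<forall>x. x \<in> B \<longrightarrow> x \<in> C \<longrightarrow> B = C)"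
  unfolding pair_partition_def partition_on_def disjoint_def
  by (auto; fastforce)

lemma is_path_drop:
  assumes "is_path V E p" "j < length p"
  shows "is_path V E (drop j p)"
  unfolding is_path_def
proof (intro conjI allI impI)
  fix i assume i: "Suc i < length (drop j p)"
  hence "Suc (j + i) < length p" by simp
  hence "E (p ! (j + i)) (p ! Suc (j + i))" using assms(1) unfolding is_path_def by blast
  thus "E (drop j p ! i) (drop j p ! Suc i)" using i by simp
qed (use assms in \<open>auto simp: is_path_def dest: in_set_dropD\<close>)

lemma is_path_rev:
  assumes "is_path V E p" "\<forall>x y. E x y \<longrightarrow> E y x"
  shows "is_path V E (rev p)"
  unfolding is_path_def
proof (intro conjI allI impI)
  fix i assume i: "Suc i < length (rev p)"
  let ?l = "length p"
  have "E (p ! (?l - Suc (Suc i))) (p ! Suc (?l - Suc (Suc i)))"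
    using assms(1) i unfolding is_path_def by auto
  moreover have "Suc (?l - Suc (Suc i)) = ?l - Suc i" using i by simp
  ultimately show "E (rev p ! i) (rev p ! Suc i)" using assms(2) i by (simp add: rev_nth)
qed (use assms in \<open>auto simp: is_path_def\<close>)

lemma leaf_end:
  assumes "is_path V E p" "\<forall>x y. E x y \<longrightarrow> E y x" "\<forall>y. E v y \<longrightarrow> y = u" "v \<in> set p"
  shows "v = hd p \<or> v = last p"
proof (rule ccontr)
  assume nt: "\<not> ?thesis"
  obtain i where i: "i < length p" "p!i = v" using assms(4) by (meson in_set_conv_nth)
  have ne: "p \<noteq> []" using assms(4) by auto
  have "i \<noteq> 0" using nt i ne by (metis hd_conv_nth)
  moreover have "i \<noteq> length p - 1" using nt i ne by (auto simp: last_conv_nth)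
  ultimately have i0: "0 < i" "Suc i < length p" using i by auto
  have "E (p!(i-1)) (p!Suc (i-1))" using assms(1) i0 unfolding is_path_def
    by (metis Suc_diff_1 Suc_lessD)
  hence "E v (p!(i-1))" using i0 i assms(2) by simp
  hence a: "p!(i-1) = u" using assms(3) by auto
  have "E v (p!Suc i)" using assms(1) i0 i unfolding is_path_def by auto
  hence b: "p!Suc i = u" using assms(3) by auto
  have "distinct p" using assms(1) unfolding is_path_def by auto
  hence "i - 1 = Suc i" using a b i0 by (metis nth_eq_iff_index_eq less_imp_diff_less Suc_lessD)
  thus False by simp
qed

lemma path_avoid:
  assumes "is_path V E p" "v \<notin> set p"
  shows "is_path (V - {v}) (\<lambda>x y. E x y \<and> x \<noteq> v \<and> y \<noteq> v) p"
proof -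
  have "\<forall>i. Suc i < length p \<longrightarrow> E (p ! i) (p ! Suc i) \<and> p ! i \<noteq> v \<and> p ! Suc i \<noteq> v"
  proof (intro allI impI)
    fix i assume i: "Suc i < length p"
    hence "p ! i \<in> set p" "p ! Suc i \<in> set p" by (auto intro: nth_mem)
    thus "E (p ! i) (p ! Suc i) \<and> p ! i \<noteq> v \<and> p ! Suc i \<noteq> v"
      using assms i unfolding is_path_def by auto
  qed
  thus ?thesis using assms unfolding is_path_def by auto
qed

lemma path_mono:
  "is_path (V - {v}) (\<lambda>x y. E x y \<and> x \<noteq> v \<and> y \<noteq> v) p \<Longrightarrow> is_path V E p"
  unfolding is_path_def by auto

lemma path_from_leaf:
  assumes "is_path V E p" "hd p = v" "hd p \<noteq> last p" "\<forall>y. E v y \<longrightarrow> y = u"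
  shows "is_path V E (tl p) \<and> hd (tl p) = u \<and> last (tl p) = last p \<and> v \<notin> set (tl p)"
proof -
  obtain q where p: "p = v # q" using assms(1,2) unfolding is_path_def by (cases p) auto
  have q: "q \<noteq> []" using assms(3) p by auto
  have "E v (q!0)" using assms(1) p q unfolding is_path_def by (metis Suc_less_eq length_Cons length_greater_0_conv nth_Cons_0 nth_Cons_Suc)
  hence "hd q = u" using assms(4) q by (simp add: hd_conv_nth)
  moreover have "is_path V E q" using is_path_drop[OF assms(1), of 1] p q by simp
  moreover have "v \<notin> set q" using assms(1) p unfolding is_path_def by auto
  ultimately show ?thesis using p q by simp
qed


lemma sub_simple: "simple_graph V E \<Longrightarrow> simple_graph (V - {v}) (\<lambda>x y. E x y \<and> x \<noteq> v \<and> y \<noteq> v)"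
  by (auto simp: simple_graph_def)

lemma sub_acyclic: "\<not> has_cycle V E \<Longrightarrow> \<not> has_cycle (V - {v}) (\<lambda>x y. E x y \<and> x \<noteq> v \<and> y \<noteq> v)"
  unfolding has_cycle_def using path_mono by fastforce

lemma leaf_exists:
  assumes sg: "simple_graph V E" and ac: "\<not> has_cycle V E" and e: "E x y"
  shows "\<exists>v u. v \<in> V \<and> E v u \<and> (\<forall>y. E v y \<longrightarrow> y = u)"
proof -
  have fin: "finite V" using sg by (simp add: simple_graph_def)
  have bound: "length q < Suc (card V)" if "is_path V E q" for q
  proof -
    have "length q = card (set q)" using that by (simp add: is_path_def distinct_card)
    also have "\<dots> \<le> card V" using that fin by (intro card_mono) (auto simp: is_path_def)
    finally show ?thesis by simp
  qed
  have xy: "x \<noteq> y" "x \<in> V" "y \<in> V" using sg e by (auto simp: simple_graph_def)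
  have p2: "is_path V E [x,y]" using xy e unfolding is_path_def
    by (auto simp: less_Suc_eq)
  obtain p where p: "is_path V E p" and pmax: "\<forall>q. is_path V E q \<longrightarrow> length q \<le> length p"
    using ex_has_greatest_nat[of "is_path V E" "[x,y]" length "Suc (card V)"] p2 bound by blast
  define n where "n = length p"
  have n2: "n \<ge> 2" using pmax p2 n_def by fastforce
  define w where "w = last p"
  define u where "u = p ! (n-2)"
  have pne: "p \<noteq> []" using p by (simp add: is_path_def)
  have wn: "w = p ! (n - 1)" using pne by (simp add: w_def n_def last_conv_nth)
  have "Suc (n-2) = n - 1" "Suc (n-2) < n" using n2 by auto
  hence Euw: "E u w" using p unfolding is_path_def u_def wn n_def by metis
  have sym: "\<forall>x y. E x y \<longrightarrow> E y x" using sg by (simp add: simple_graph_def)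
  have irr: "\<And>x. \<not> E x x" using sg by (simp add: simple_graph_def)
  have "\<forall>z. E w z \<longrightarrow> z = u"
  proof (intro allI impI)
    fix z assume Ewz: "E w z"
    show "z = u"
    proof (rule ccontr)
      assume zu: "z \<noteq> u"
      show False
      proof (cases "z \<in> set p")
        case False
        have zV: "z \<in> V" using sg Ewz by (simp add: simple_graph_def)
        have "is_path V E (p @ [z])"
          unfolding is_path_def
        proof (intro conjI allI impI)
          fix i assume i: "Suc i < length (p @ [z])"
          show "E ((p @ [z]) ! i) ((p @ [z]) ! Suc i)"
          proof (cases "Suc i < n")
            case True
            then show ?thesis using p n_def unfolding is_path_def by (auto simp: nth_append)
          next
            case False
            hence "i = n - 1" using i n_def by simp
            then show ?thesis using Ewz wn n2 n_def by (auto simp: nth_append)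
          qed
        qed (use p False zV in \<open>auto simp: is_path_def\<close>)
        thus False using pmax n_def by fastforce
      next
        case True
        then obtain j where j: "j < n" "p ! j = z" by (metis in_set_conv_nth n_def)
        have "j \<noteq> n - 1" using j wn Ewz irr by auto
        moreover have "j \<noteq> n - 2" using j zu u_def by auto
        ultimately have j3: "j + 3 \<le> n" using j by linarith
        define c where "c = drop j p"
        have "is_path V E c" using is_path_drop[OF p] j n_def c_def by simp
        moreover have "length c \<ge> 3" using j3 c_def n_def by simp
        moreover have "hd c = z" using j c_def n_def by (simp add: hd_drop_conv_nth)
        moreover have "last c = w" using j c_def n_def w_def by simp
        ultimately show False using ac Ewz unfolding has_cycle_def by blast
      qed
    qed
  qed
  moreover have "w \<in> V" using p pne w_def by (auto simp: is_path_def)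
  ultimately show ?thesis using Euw sym by blast
qed


lemma linked_disj: "linked V E P f \<Longrightarrow> B \<in> P \<Longrightarrow> C \<in> P \<Longrightarrow> x \<in> set (f B) \<Longrightarrow> x \<in> set (f C) \<Longrightarrow> B = C"
  unfolding linked_def by blast

lemma linked_avoid:
  assumes "linked V E P f" "\<And>B. B \<in> P \<Longrightarrow> v \<notin> set (f B)"
  shows "linked (V - {v}) (\<lambda>x y. E x y \<and> x \<noteq> v \<and> y \<noteq> v) P f"
  using assms unfolding linked_def by (simp add: path_avoid)

lemma orient:
  assumes "linked V E P f" "\<forall>x y. E x y \<longrightarrow> E y x" "B \<in> P" "v \<in> B"
  shows "\<exists>h. is_path V E h \<and> hd h = v \<and> {v, last h} = B \<and> set h = set (f B)"
proof -
  have pb: "is_path V E (f B)" "{hd (f B), last (f B)} = B" using assms unfolding linked_def by auto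
  have ne: "f B \<noteq> []" using pb by (simp add: is_path_def)
  show ?thesis
  proof (cases "hd (f B) = v")
    case True thus ?thesis using pb by blast
  next
    case False
    have "v \<in> {hd (f B), last (f B)}" using pb(2) assms(4) by simp
    hence "last (f B) = v" using False by auto
    moreover have "is_path V E (rev (f B))" using is_path_rev pb assms(2) by blast
    ultimately show ?thesis using pb ne
      by (intro exI[of _ "rev (f B)"]) (auto simp: hd_rev last_rev insert_commute)
  qed
qed

lemma in_path_block:
  assumes "linked V E P f" "\<forall>x y. E x y \<longrightarrow> E y x" "\<forall>y. E v y \<longrightarrow> y = u" "B \<in> P" "v \<in> set (f B)"
  shows "v \<in> B"
proof -
  have pb: "is_path V E (f B)" "{hd (f B), last (f B)} = B" using assms unfolding linked_def by auto
  thus ?thesis using leaf_end[OF pb(1) assms(2,3,5)] by auto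
qed

lemma end_in_path:
  assumes "linked V E P f" "B \<in> P" "x \<in> B"
  shows "x \<in> set (f B)"
proof -
  have pb: "is_path V E (f B)" "{hd (f B), last (f B)} = B" using assms unfolding linked_def by auto
  have ne: "f B \<noteq> []" using pb by (simp add: is_path_def)
  have "x = hd (f B) \<or> x = last (f B)" using pb(2) assms(3) by blast
  thus ?thesis using ne by auto
qed

lemma red1:
  assumes "pair_partition X P" "linked V E P f" "\<forall>x y. E x y \<longrightarrow> E y x" "\<forall>y. E v y \<longrightarrow> y = u" "v \<notin> X"
  shows "linked (V - {v}) (\<lambda>x y. E x y \<and> x \<noteq> v \<and> y \<noteq> v) P f"
proof -
  have "v \<notin> set (f B)" if "B \<in> P" for B
  proof
    assume "v \<in> set (f B)"
    hence "v \<in> B" using in_path_block[OF assms(2,3,4) that] by simp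
    moreover have "B \<subseteq> X" using assms(1) that unfolding pp_iff by blast
    ultimately show False using assms(5) by blast
  qed
  moreover have "\<forall>B\<in>P. is_path V E (f B) \<and> {hd (f B), last (f B)} = B"
    "\<forall>B\<in>P. \<forall>C\<in>P. B \<noteq> C \<longrightarrow> set (f B) \<inter> set (f C) = {}"
    using assms(2) unfolding linked_def by blast+
  ultimately show ?thesis unfolding linked_def
    by (simp add: path_avoid)
qed

lemma red3:
  assumes pp: "pair_partition X P" and lk: "linked V E P f" and sym: "\<forall>x y. E x y \<longrightarrow> E y x"
    and lf: "\<forall>y. E v y \<longrightarrow> y = u" and vu: "E v u" and irr: "\<not> E v v"
    and vX: "v \<in> X" and uX: "u \<in> X"
  shows "{v,u} \<in> P \<and> pair_partition (X - {v,u}) (P - {{v,u}})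
     \<and> linked (V - {v}) (\<lambda>x y. E x y \<and> x \<noteq> v \<and> y \<noteq> v) (P - {{v,u}}) f"
proof -
  obtain B0 where B0: "B0 \<in> P" "v \<in> B0" using pp vX by (auto simp: pp_iff)
  obtain h where h: "is_path V E h" "hd h = v" "{v, last h} = B0" "set h = set (f B0)"
    using orient[OF lk sym B0] by blast
  have c2: "card B0 = 2" using pp B0 by (auto simp: pp_iff)
  hence hl: "hd h \<noteq> last h" using h by auto
  have t: "hd (tl h) = u" "tl h \<noteq> []" using path_from_leaf[OF h(1,2) hl lf] h hl
     by (auto simp: is_path_def)
  have "u \<in> set (tl h)" using t by (metis hd_in_set)
  hence "u \<in> set h" by (metis list.sel(2) list.set_sel(2))
  hence uf: "u \<in> set (f B0)" using h by simp
  obtain B1 where B1: "B1 \<in> P" "u \<in> B1" using pp uX by (auto simp: pp_iff)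
  have "u \<in> set (f B1)" using end_in_path[OF lk B1] .
  hence "B1 = B0" using linked_disj[OF lk B1(1) B0(1) _ uf] by simp
  hence "u \<in> B0" using B1 by simp
  have uv: "u \<noteq> v" using vu irr by auto
  have B0eq: "B0 = {v,u}" using \<open>u \<in> B0\<close> h(3) uv by auto
  have dis: "\<And>B C x. B \<in> P \<Longrightarrow> C \<in> P \<Longrightarrow> x \<in> B \<Longrightarrow> x \<in> C \<Longrightarrow> B = C"
    using pp unfolding pp_iff by blast
  have pp2: "pair_partition (X - {v,u}) (P - {{v,u}})"
    unfolding pp_iff
  proof (intro conjI ballI allI impI)
    fix B assume B: "B \<in> P - {{v,u}}"
    have "v \<notin> B" "u \<notin> B" using dis[of B B0] B B0 B0eq by auto
    thus "B \<subseteq> X - {v,u}" using B pp unfolding pp_iff by blast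
    show "card B = 2" using B pp unfolding pp_iff by blast
  next
    fix x assume x: "x \<in> X - {v,u}"
    then obtain B where "B \<in> P" "x \<in> B" using pp unfolding pp_iff by blast
    thus "\<exists>B\<in>P - {{v,u}}. x \<in> B" using x by auto
  next
    fix B C x assume "B \<in> P - {{v,u}}" "C \<in> P - {{v,u}}" "x \<in> B" "x \<in> C"
    thus "B = C" using dis by blast
  qed
  have lk2: "linked V E (P - {{v,u}}) f" using lk unfolding linked_def by blast
  have "v \<notin> set (f B)" if "B \<in> P - {{v,u}}" for B
  proof
    assume "v \<in> set (f B)"
    hence "v \<in> B" using in_path_block[OF lk sym lf] that by blast
    thus False using dis[of B B0] that B0 B0eq by blast
  qed
  hence "linked (V - {v}) (\<lambda>x y. E x y \<and> x \<noteq> v \<and> y \<noteq> v) (P - {{v,u}}) f"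
    using linked_avoid[OF lk2] by blast
  thus ?thesis using pp2 B0 B0eq by auto
qed


lemma red2:
  assumes pp: "pair_partition X P" and lk: "linked V E P f" and sym: "\<forall>x y. E x y \<longrightarrow> E y x"
    and lf: "\<forall>y. E v y \<longrightarrow> y = u"
    and vX: "v \<in> X" and uX: "u \<notin> X"
  shows "\<exists>a. {v,a} \<in> P \<and> a \<noteq> u \<and> a \<noteq> v \<and> pair_partition (insert u (X - {v})) (insert {u,a} (P - {{v,a}}))
     \<and> (\<exists>f'. linked (V - {v}) (\<lambda>x y. E x y \<and> x \<noteq> v \<and> y \<noteq> v) (insert {u,a} (P - {{v,a}})) f')"
proof -
  obtain B0 where B0: "B0 \<in> P" "v \<in> B0" using pp vX by (auto simp: pp_iff)
  obtain h where h: "is_path V E h" "hd h = v" "{v, last h} = B0" "set h = set (f B0)"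
    using orient[OF lk sym B0] by blast
  define a where "a = last h"
  have c2: "card B0 = 2" using pp B0 by (auto simp: pp_iff)
  hence hl: "hd h \<noteq> last h" using h by auto
  have av: "a \<noteq> v" using hl h a_def by auto
  have B0X: "B0 \<subseteq> X" using pp B0 by (auto simp: pp_iff)
  have au: "a \<noteq> u" using B0X uX h a_def by auto
  have t: "is_path V E (tl h)" "hd (tl h) = u" "last (tl h) = a" "v \<notin> set (tl h)"
    using path_from_leaf[OF h(1,2) hl lf] a_def by auto
  have tsub: "set (tl h) \<subseteq> set (f B0)" using h(4) by (metis list.set_sel(2) subsetI tl_Nil)
  have B0eq: "B0 = {v,a}" using h a_def by simp
  define P' where "P' = insert {u,a} (P - {{v,a}})"
  define f' where "f' = f({u,a} := tl h)"
  have uB: "u \<notin> B" if "B \<in> P" for B using pp that uX by (auto simp: pp_iff)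
  have vB: "v \<notin> B" if "B \<in> P" "B \<noteq> B0" for B using pp that B0 unfolding pp_iff by blast
  have ua_notin: "{u,a} \<notin> P" using uB by blast
  have pp': "pair_partition (insert u (X - {v})) P'"
    unfolding pp_iff
  proof (intro conjI ballI allI impI)
    fix B assume "B \<in> P'"
    then consider "B = {u,a}" | "B \<in> P" "B \<noteq> B0" using P'_def B0eq by auto
    then show "B \<subseteq> insert u (X - {v})"
    proof cases
      case 1 thus ?thesis using B0X B0eq av by auto
    next
      case 2 thus ?thesis using vB pp by (auto simp: pp_iff)
    qed
    show "card B = 2" using \<open>B \<in> P'\<close> pp au unfolding P'_def pp_iff by auto
  next
    fix x assume "x \<in> insert u (X - {v})"
    then consider "x = u" | "x \<in> X" "x \<noteq> v" by auto
    then show "\<exists>B\<in>P'. x \<in> B"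
    proof cases
      case 1 thus ?thesis by (auto simp: P'_def)
    next
      case 2
      then obtain B where "B \<in> P" "x \<in> B" using pp by (auto simp: pp_iff)
      thus ?thesis using 2 B0eq by (cases "B = B0") (auto simp: P'_def)
    qed
  next
    fix B C x assume BC: "B \<in> P'" "C \<in> P'" "x \<in> B" "x \<in> C"
    have dis: "\<And>B C x. B \<in> P \<Longrightarrow> C \<in> P \<Longrightarrow> x \<in> B \<Longrightarrow> x \<in> C \<Longrightarrow> B = C"
      using pp by (auto simp: pp_iff)
    have ina: "\<And>B. B \<in> P \<Longrightarrow> a \<in> B \<Longrightarrow> B = B0" using dis B0 B0eq by blast
    show "B = C" using BC uB ina B0eq unfolding P'_def
      by (auto intro: dis) (metis dis insertE singletonD)+
  qed
  have lk': "linked (V - {v}) (\<lambda>x y. E x y \<and> x \<noteq> v \<and> y \<noteq> v) P' f'"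
    unfolding linked_def
  proof (rule conjI; intro ballI impI)
    fix B assume "B \<in> P'"
    then consider "B = {u,a}" | "B \<in> P" "B \<noteq> B0" using P'_def B0eq by auto
    then show "is_path (V - {v}) (\<lambda>x y. E x y \<and> x \<noteq> v \<and> y \<noteq> v) (f' B) \<and> {hd (f' B), last (f' B)} = B"
    proof cases
      case 1 thus ?thesis using t path_avoid by (auto simp: f'_def)
    next
      case 2
      have "B \<noteq> {u,a}" using 2 ua_notin by auto
      hence fB: "f' B = f B" by (simp add: f'_def)
      have "v \<notin> set (f B)" using in_path_block[OF lk sym lf 2(1)] vB 2 by blast
      moreover have "is_path V E (f B)" "{hd (f B), last (f B)} = B" using lk 2(1) unfolding linked_def by blast+
      ultimately show ?thesis using fB path_avoid by simp
    qed
  next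
    fix B C assume BC: "B \<in> P'" "C \<in> P'" "B \<noteq> C"
    have lkd: "\<And>B C. B \<in> P \<Longrightarrow> C \<in> P \<Longrightarrow> B \<noteq> C \<Longrightarrow> set (f B) \<inter> set (f C) = {}"
      using lk unfolding linked_def by blast
    have fx: "\<And>B. B \<in> P \<Longrightarrow> f' B = f B" using ua_notin f'_def by auto
    have fua: "f' {u,a} = tl h" by (simp add: f'_def)
    show "set (f' B) \<inter> set (f' C) = {}"
    proof (cases "B = {u,a}")
      case True
      hence "C \<in> P" "C \<noteq> B0" using BC P'_def B0eq by auto
      thus ?thesis using True fua fx lkd[OF B0(1) \<open>C \<in> P\<close>] tsub by auto
    next
      case False
      hence B: "B \<in> P" "B \<noteq> B0" using BC P'_def B0eq by auto
      show ?thesis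
      proof (cases "C = {u,a}")
        case True
        thus ?thesis using B fua fx lkd[OF B0(1) B(1)] tsub by auto
      next
        case False
        hence "C \<in> P" using BC P'_def by auto
        thus ?thesis using B fx lkd BC by auto
      qed
    qed
  qed
  show ?thesis using B0 B0eq au av pp' lk' P'_def by blast
qed


lemma no_edge_empty:
  assumes "\<forall>x y. \<not> E x y" "pair_partition X P" "linked V E P f"
  shows "P = {}"
proof (rule ccontr)
  assume "P \<noteq> {}"
  then obtain B where B: "B \<in> P" by auto
  have pb: "is_path V E (f B)" "{hd (f B), last (f B)} = B" "card B = 2"
    using assms B unfolding linked_def pp_iff by auto
  have "length (f B) \<le> 1"
  proof (rule ccontr)
    assume "\<not> length (f B) \<le> 1"
    hence "Suc 0 < length (f B)" by simp
    thus False using pb(1) assms(1) unfolding is_path_def by blast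
  qed
  moreover have "f B \<noteq> []" using pb by (simp add: is_path_def)
  ultimately obtain z where "f B = [z]" by (cases "f B") auto
  thus False using pb by auto
qed

lemma main:
  assumes "simple_graph V E" "\<not> has_cycle V E" "pair_partition X P" "linked V E P f"
    "pair_partition X Q" "linked V E Q g"
  shows "P = Q"
  using assms
proof (induction "card V" arbitrary: V E X P Q f g rule: less_induct)
  case less
  note sg = less.prems(1) and ac = less.prems(2) and ppP = less.prems(3) and lkP = less.prems(4)
    and ppQ = less.prems(5) and lkQ = less.prems(6)
  show ?case
  proof (cases "\<exists>x y. E x y")
    case False
    hence "\<forall>x y. \<not> E x y" by blast
    thus ?thesis using no_edge_empty[OF _ ppP lkP] no_edge_empty[OF _ ppQ lkQ] by simp
  next
    case True
    then obtain x y where "E x y" by blast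
    then obtain v u where vu: "v \<in> V" "E v u" "\<forall>y. E v y \<longrightarrow> y = u"
      using leaf_exists[OF sg ac] by blast
    have sym: "\<forall>x y. E x y \<longrightarrow> E y x" and irr: "\<not> E v v" using sg by (auto simp: simple_graph_def)
    define E' where "E' = (\<lambda>x y. E x y \<and> x \<noteq> v \<and> y \<noteq> v)"
    have fin: "finite V" using sg by (simp add: simple_graph_def)
    have lt: "card (V - {v}) < card V" by (rule card_Diff1_less[OF fin vu(1)])
    have sg': "simple_graph (V - {v}) E'" using sub_simple[OF sg] E'_def by simp
    have ac': "\<not> has_cycle (V - {v}) E'" using sub_acyclic[OF ac] E'_def by simp
    note IH = less.hyps[OF lt sg' ac']
    show ?thesis
    proof (cases "v \<in> X")
      case False
      show ?thesis using IH[OF ppP red1[OF ppP lkP sym vu(3) False, folded E'_def] ppQ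
         red1[OF ppQ lkQ sym vu(3) False, folded E'_def]] .
    next
      case vX: True
      show ?thesis
      proof (cases "u \<in> X")
        case True
        note rP = red3[OF ppP lkP sym vu(3) vu(2) irr vX True, folded E'_def]
        note rQ = red3[OF ppQ lkQ sym vu(3) vu(2) irr vX True, folded E'_def]
        have "P - {{v,u}} = Q - {{v,u}}" using IH[of _ "P - {{v,u}}" f _ g] rP rQ by blast
        thus ?thesis using rP rQ by (metis insert_Diff)
      next
        case False
        obtain a f' where a: "{v,a} \<in> P" "a \<noteq> u" "a \<noteq> v"
          "pair_partition (insert u (X - {v})) (insert {u,a} (P - {{v,a}}))"
          "linked (V - {v}) E' (insert {u,a} (P - {{v,a}})) f'"
          using red2[OF ppP lkP sym vu(3) vX False, folded E'_def] by blast
        obtain b g' where b: "{v,b} \<in> Q" "b \<noteq> u" "b \<noteq> v"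
          "pair_partition (insert u (X - {v})) (insert {u,b} (Q - {{v,b}}))"
          "linked (V - {v}) E' (insert {u,b} (Q - {{v,b}})) g'"
          using red2[OF ppQ lkQ sym vu(3) vX False, folded E'_def] by blast
        have eq: "insert {u,a} (P - {{v,a}}) = insert {u,b} (Q - {{v,b}})"
          using IH[OF a(4) a(5) b(4) b(5)] .
        have uP: "u \<notin> B" if "B \<in> P" for B using ppP that False by (auto simp: pp_iff)
        have uQ: "u \<notin> B" if "B \<in> Q" for B using ppQ that False by (auto simp: pp_iff)
        have "{u,a} \<in> insert {u,b} (Q - {{v,b}})" by (metis eq insertI1)
        hence "{u,a} = {u,b}" using uQ by blast
        hence "a \<in> {u,b}" by blast
        hence ab: "a = b" using a(2) by blast
        have "P - {{v,a}} = Q - {{v,a}}"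
        proof -
          have n1: "{u,a} \<notin> P - {{v,a}}" using uP by blast
          have n2: "{u,a} \<notin> Q - {{v,a}}" using uQ by blast
          have "P - {{v,a}} = insert {u,a} (P - {{v,a}}) - {{u,a}}" using n1 by simp
          also have "\<dots> = insert {u,a} (Q - {{v,a}}) - {{u,a}}" using eq ab by simp
          also have "\<dots> = Q - {{v,a}}" using n2 by simp
          finally show ?thesis .
        qed
        thus ?thesis using a(1) b(1) ab by (metis insert_Diff)
      qed
    qed
  qed
qed

theorem mainTheorem3:
  fixes V :: "'a set" and E :: "'a \<Rightarrow> 'a \<Rightarrow> bool" and X :: "'a set"
  assumes "is_tree V E" and "X \<subseteq> V" and "even (card X)"
    and "feasible V E X P" and "feasible V E X Q"
  shows "P = Q"
proof -
  have pp: "pair_partition X P" "pair_partition X Q" using assms(4,5) unfolding feasible_def by blast+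
  obtain f where f: "linked V E P f" using assms(4) unfolding feasible_def linked_def by blast
  obtain g where g: "linked V E Q g" using assms(5) unfolding feasible_def linked_def by blast
  have sg: "simple_graph V E" and ac: "\<not> has_cycle V E" using assms(1) unfolding is_tree_def by blast+
  show ?thesis using main[OF sg ac pp(1) f pp(2) g] .
qed


end
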